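(* Let $V$ be an object of $\mathcal C$ and let $v\in V$ be a dominant vector of weight $i\in\{0,1,\dots,r-2\}$. Put $j=r-2-i$ and define the following vectors of $V$: - $h_{i-2k}=F^kv$ for $k=0,\dots,i$; - $R_{r-j}=Ev$ and $R_{r-j+2k}=E^kR_{r-j}$ for $k=0,\dots,j$; - $s_i=FR_{r-j}$ and $s_{i-2k}=F^ks_i$ for $k=0,\dots,i$; - $L_{j-r}=F^{i+1}v$ and $L_{j-r-2k}=F^kL_{j-r}$ for $k=0,\dots,j$. Then the linear span of these $2r$ vectors is a submodule of $V$. Moreover, the following relations hold whenever the involved vectors are defined: - $Hw_m=mw_m$ and $Kw_m=q^mw_m$ for $w\in\{h,s,R,L\}$; - $ER_m=R_{m+2}$, and $Fw_m=w_{m-2}$ for $w\in\{h,s,L\}$; - $Fh_{-i}=L_{j-r}$ and $EL_{j-r}=s_{-i}$; - $ER_{j+r}=Es_i=Fs_{-i}=FL_{-j-r}=0$; - $Eh_{i-2k}=\gamma_{i,k}h_{i-2k+2}+s_{i-2k+2}$ and $Es_{i-2k}=\gamma_{i,k}s_{i-2k+2}$; - $FR_{r-j+2k}=-\gamma_{j,k}R_{r-j+2k-2}$ and $EL_{j-2k-r}=-\gamma_{j,k}L_{j-2k-r+2}$. Here $\gamma_{n,k}=[k][n-k+1]$.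
   Context: Fix a positive integer $r$. Set $q=e^{\pi\sqrt{-1}/r}$, $q^x=e^{\pi\sqrt{-1}x/r}$, $\{x\}=q^x-q^{-x}$, $[x]=\{x\}/\{1\}$. $\overline U=\overline U_q^H\mathfrak{sl}(2)$ is the $\mathbb C$-algebra generated by $E,F,K,K^{-1},H$ with relations - $KK^{-1}=K^{-1}K=1$, $KEK^{-1}=q^2E$, $KFK^{-1}=q^{-2}F$, - $EF-FE=\frac{K-K^{-1}}{q-q^{-1}}$, - $HK=KH$, $[H,E]=2E$, $[H,F]=-2F$, - $E^r=F^r=0$. $\mathcal C$ is the category of finite-dimensional weight $\overline U$-modules: $H$ acts diagonalizably and $K$ acts by $q^\lambda$ on $H$-eigenvectors of eigenvalue (weight) $\lambda$. A weight vector $v$ is called dominant if $(FE)^2v=0$. *)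

theory Defs
  imports Complex_Main
begin

text \<open>Quantum parameters: q = exp(pi i / r), q^x = exp(pi i x / r),
  {x} = q^x - q^-x, [x] = {x}/{1}, gamma_{n,k} = [k][n-k+1].\<close>

definition qp :: "nat \<Rightarrow> complex \<Rightarrow> complex" where
  "qp r x = exp (complex_of_real pi * \<i> * x / of_nat r)"

definition qbr :: "nat \<Rightarrow> complex \<Rightarrow> complex" where
  "qbr r x = qp r x - qp r (- x)"

definition qint :: "nat \<Rightarrow> complex \<Rightarrow> complex" where
  "qint r x = qbr r x / qbr r 1"

definition qgamma :: "nat \<Rightarrow> nat \<Rightarrow> nat \<Rightarrow> complex" where
  "qgamma r n k = qint r (of_nat k) * qint r (of_nat n - of_nat k + 1)"

text \<open>A finite-dimensional complex vector space ('v, scale) together with linear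
  operators E, F, K, Ki (= K^-1), H defining an object of the category C:
  a finite-dimensional weight module over the unrolled restricted quantum group.\<close>

definition weight_module ::
  "nat \<Rightarrow> (complex \<Rightarrow> 'v::ab_group_add \<Rightarrow> 'v) \<Rightarrow> ('v \<Rightarrow> 'v) \<Rightarrow> ('v \<Rightarrow> 'v) \<Rightarrow>
   ('v \<Rightarrow> 'v) \<Rightarrow> ('v \<Rightarrow> 'v) \<Rightarrow> ('v \<Rightarrow> 'v) \<Rightarrow> bool" where
  "weight_module r scale E F K Ki H \<longleftrightarrow>
     vector_space scale \<and>
     (\<exists>B. finite B \<and> module.span scale B = UNIV) \<and>
     Vector_Spaces.linear scale scale E \<and> Vector_Spaces.linear scale scale F \<and>
     Vector_Spaces.linear scale scale K \<and> Vector_Spaces.linear scale scale Ki \<and>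
     Vector_Spaces.linear scale scale H \<and>
     (\<forall>x. K (Ki x) = x) \<and> (\<forall>x. Ki (K x) = x) \<and>
     (\<forall>x. K (E (Ki x)) = scale (qp r 2) (E x)) \<and>
     (\<forall>x. K (F (Ki x)) = scale (qp r (-2)) (F x)) \<and>
     (\<forall>x. E (F x) - F (E x) = scale (1 / (qp r 1 - qp r (-1))) (K x - Ki x)) \<and>
     (\<forall>x. H (K x) = K (H x)) \<and>
     (\<forall>x. H (E x) - E (H x) = scale 2 (E x)) \<and>
     (\<forall>x. H (F x) - F (H x) = scale (-2) (F x)) \<and>
     (\<forall>x. (E ^^ r) x = 0) \<and> (\<forall>x. (F ^^ r) x = 0) \<and>
     module.span scale {w. \<exists>c. H w = scale c w} = UNIV \<and>
     (\<forall>w c. H w = scale c w \<longrightarrow> K w = scale (qp r c) w)"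

end

theory Submission
  imports Defs "HOL-Analysis.Complex_Transcendental"
begin


lemma qp_add: "qp r (x + y) = qp r x * qp r y"
  unfolding qp_def by (simp add: ring_distribs add_divide_distrib exp_add)
lemma qp_neg: "qp r (- x) = inverse (qp r x)"
  unfolding qp_def by (simp add: exp_minus[symmetric])
lemma qp_nz[simp]: "qp r x \<noteq> 0"
  unfolding qp_def by simp
lemma qp_diff: "qp r (x - y) = qp r x / qp r y"
  using qp_add[of r x "-y"] by (simp add: qp_neg divide_inverse)
lemma qp_0[simp]: "qp r 0 = 1" unfolding qp_def by simp

lemma qp_2r: "r > 0 \<Longrightarrow> qp r (2 * of_nat r) = 1"
  unfolding qp_def by (simp add: mult.commute mult.left_commute)

lemma qp_int_1: assumes "r > 0" "qp r (of_int m) = 1" shows "int (2*r) dvd m"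
proof -
  from assms(2) obtain n :: int where n: "Im (complex_of_real pi * \<i> * of_int m / of_nat r) = of_int (2*n) * pi"
    unfolding qp_def exp_eq_1 by blast
  have "Im (complex_of_real pi * \<i> * of_int m / of_nat r) = pi * m / r"
    by (simp add: Im_divide_of_nat)
  with n have "pi * m / r = 2 * n * pi" by simp
  hence "real_of_int m = real_of_int (2*n*int r)" using assms(1) by (simp add: field_simps)
  hence "m = 2*n*int r" by (simp only: of_int_eq_iff)
  thus ?thesis by simp
qed

lemma q_ne: assumes "r \<ge> 2" shows "qp r 1 - qp r (-1) \<noteq> 0"
proof
  assume "qp r 1 - qp r (-1) = 0"
  hence "qp r 1 = qp r (-1)" by simp
  hence "qp r (1 - (-1)) = 1" unfolding qp_diff by simp
  moreover have "(1::complex) - (-1) = of_int 2" by simp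
  ultimately have "qp r (of_int 2) = 1" by metis
  from qp_int_1[OF _ this] assms have "int (2*r) dvd 2" by simp
  hence "int (2*r) \<le> 2" by (rule zdvd_imp_le) simp
  with assms show False by simp
qed


definition cc :: "nat \<Rightarrow> complex \<Rightarrow> complex" where
  "cc r x = (qp r (x+1) + qp r (-(x+1))) / (qp r 1 - qp r (-1))^2"

lemma qint_alt: "qint r x = (qp r x - inverse (qp r x)) / (qp r 1 - inverse (qp r 1))"
  unfolding qint_def qbr_def by (simp add: qp_neg)

lemma cc_alt: "cc r x = (qp r (x+1) + inverse (qp r (x+1))) / (qp r 1 - inverse (qp r 1))^2"
  unfolding cc_def qp_neg ..

lemma q_ne': "r \<ge> 2 \<Longrightarrow> qp r 1 - inverse (qp r 1) \<noteq> 0"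
  using q_ne[of r] by (simp add: qp_neg)

lemma cc_eq_imp: assumes r: "r \<ge> 2" and e: "cc r (of_int m) = cc r (of_int n)"
  shows "int (2*r) dvd (m - n) \<or> int (2*r) dvd (m + n + 2)"
proof -
  define a where "a = qp r (of_int m + 1)"
  define b where "b = qp r (of_int n + 1)"
  have a0: "a \<noteq> 0" and b0: "b \<noteq> 0" unfolding a_def b_def by simp_all
  from e have "a + inverse a = b + inverse b"
    unfolding cc_alt a_def b_def using q_ne'[OF r] by (simp add: divide_cancel_right)
  hence "(a - b) * (a * b - 1) = 0" using a0 b0 by (simp add: field_simps)
  hence "a = b \<or> a * b = 1" by simp
  thus ?thesis
  proof
    assume "a = b"
    hence "qp r ((of_int m + 1) - (of_int n + 1)) = 1" unfolding a_def b_def qp_diff by simp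
    moreover have "(of_int m + 1) - (of_int n + 1) = (of_int (m - n) :: complex)" by simp
    ultimately have "qp r (of_int (m-n)) = 1" by metis
    from qp_int_1[OF _ this] r show ?thesis by simp
  next
    assume "a * b = 1"
    hence "qp r ((of_int m + 1) + (of_int n + 1)) = 1" unfolding a_def b_def qp_add by simp
    moreover have "(of_int m + 1) + (of_int n + 1) = (of_int (m + n + 2) :: complex)" by simp
    ultimately have "qp r (of_int (m+n+2)) = 1" by metis
    from qp_int_1[OF _ this] r show ?thesis by simp
  qed
qed

lemma cc_step: assumes r: "r \<ge> 2" shows "cc r (x + 2) = cc r x + qint r (x + 2)"
proof -
  define a where "a = qp r (x + 1)"
  define q where "q = qp r 1"
  have a0: "a \<noteq> 0" and q0: "q \<noteq> 0" unfolding a_def q_def by simp_all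
  have qq: "q - inverse q \<noteq> 0" unfolding q_def by (rule q_ne'[OF r])
  have e1: "qp r (x + 2 + 1) = a * q * q" unfolding a_def q_def
    by (metis add.assoc one_add_one qp_add)
  have e2: "qp r (x + 2) = a * q" unfolding a_def q_def
    by (metis add.assoc one_add_one qp_add)
  have "cc r (x + 2) = (a*q*q + inverse (a*q*q)) / (q - inverse q)^2"
    unfolding cc_alt e1 q_def ..
  also have "\<dots> = (a + inverse a)/(q - inverse q)^2 + (a*q - inverse (a*q))/(q - inverse q)"
  proof -
    have n: "a*q*q + inverse (a*q*q) = (a + inverse a) + (q - inverse q) * (a*q - inverse (a*q))"
      using a0 q0 by (simp add: field_simps)
    show ?thesis unfolding n using qq by (simp add: add_divide_distrib power2_eq_square)
  qed
  also have "\<dots> = cc r x + qint r (x + 2)"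
    unfolding cc_alt qint_alt e2 a_def q_def ..
  finally show ?thesis .
qed

lemma qint_neg: "qint r (-x) = - qint r x"
  unfolding qint_alt qp_neg by (metis inverse_inverse_eq minus_diff_eq divide_minus_left)

lemma qint_0[simp]: "qint r 0 = 0" unfolding qint_alt by simp

lemma qint_refl: "r > 0 \<Longrightarrow> qint r (of_nat r - x) = qint r x"
proof -
  assume "r > 0"
  have "qp r (of_nat r) = -1" unfolding qp_def
    using \<open>r > 0\<close> by (simp add: mult.commute)
  hence "qp r (of_nat r - x) = - inverse (qp r x)" unfolding qp_diff by (simp add: divide_inverse)
  show ?thesis unfolding qint_alt \<open>qp r (of_nat r - x) = - inverse (qp r x)\<close> by simp
qed

lemma qid: assumes r: "r \<ge> 2"
  shows "qint r n * qint r (m - n + 1) + qint r (m - 2*n) = qint r (n+1) * qint r (m - n)"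
proof -
  define A where "A = qp r n"
  define B where "B = qp r m"
  define q where "q = qp r 1"
  have A0: "A \<noteq> 0" and B0: "B \<noteq> 0" and q0: "q \<noteq> 0" unfolding A_def B_def q_def by simp_all
  have qq: "q - inverse q \<noteq> 0" unfolding q_def by (rule q_ne'[OF r])
  have e1: "qp r (m - n + 1) = B * q / A" unfolding A_def B_def q_def qp_add qp_diff by simp
  have e2: "qp r (m - 2*n) = B / (A*A)" unfolding A_def B_def qp_diff
    by (metis mult_2 qp_add)
  have e3: "qp r (n + 1) = A * q" unfolding A_def q_def qp_add ..
  have e4: "qp r (m - n) = B / A" unfolding A_def B_def qp_diff ..
  define d where "d = q - inverse q"
  have gen: "\<And>N1 N2 N3 N4 N5. N1*N2 + d*N3 = N4*N5 \<Longrightarrow> (N1/d)*(N2/d) + N3/d = (N4/d)*(N5/d)"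
    using qq unfolding d_def[symmetric] by (simp add: field_simps power2_eq_square)
  have num: "(A - inverse A) * (B*q/A - inverse (B*q/A)) + d * (B/(A*A) - inverse (B/(A*A)))
     = (A*q - inverse (A*q)) * (B/A - inverse (B/A))"
    unfolding d_def using A0 B0 q0 by (simp add: field_simps)
  show ?thesis unfolding qint_alt e1 e2 e3 e4 A_def[symmetric] B_def[symmetric] q_def[symmetric]
    d_def[symmetric] by (rule gen[OF num])
qed


lemma qint_1: "r \<ge> 2 \<Longrightarrow> qint r 1 = 1"
  unfolding qint_def qbr_def using q_ne[of r] by simp

lemma cc_ne: assumes "r \<ge> 2" "\<not> int (2*r) dvd (m - n)" "\<not> int (2*r) dvd (m + n + 2)"
  shows "cc r (of_int m) \<noteq> cc r (of_int n)"
  using cc_eq_imp[OF assms(1)] assms(2,3) by blast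

lemma cc_eq: assumes "r > 0" "m + n + 2 = 2 * int r"
  shows "cc r (of_int m) = cc r (of_int n)"
proof -
  have "(of_int m + 1 :: complex) = 2 * of_nat r - (of_int n + 1)"
  proof -
    have "(of_int (m + n + 2) :: complex) = of_int (2 * int r)" using assms(2) by simp
    thus ?thesis by (simp add: algebra_simps)
  qed
  hence "qp r (of_int m + 1) = qp r (2 * of_nat r - (of_int n + 1))" by (rule arg_cong)
  also have "\<dots> = qp r (2 * of_nat r) / qp r (of_int n + 1)" by (rule qp_diff)
  also have "\<dots> = inverse (qp r (of_int n + 1))" using qp_2r[OF assms(1)] by (simp add: divide_inverse)
  finally have "qp r (of_int m + 1) = inverse (qp r (of_int n + 1))" .
  thus ?thesis unfolding cc_alt by (simp add: add.commute)
qed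

lemma ndvd_range: fixes x d k :: int assumes "d > 0" "k * d < x" "x < (k+1) * d" shows "\<not> d dvd x"
proof
  assume "d dvd x"
  then obtain t where t: "x = d * t" by blast
  have "k < t" using assms(1,2) t by (simp add: mult.commute)
  moreover have "t < k + 1" using assms(1,3) t by (simp add: mult.commute)
  ultimately show False by simp
qed

lemma qid2: assumes r: "r \<ge> 2"
  shows "qint r n * qint r (m + n - 1) + qint r (m + 2*n) = qint r (n+1) * qint r (m + n)"
proof -
  have q: "qint r n * qint r ((-m) - n + 1) + qint r ((-m) - 2*n) = qint r (n+1) * qint r ((-m) - n)"
    by (rule qid[OF r])
  have e1: "qint r ((-m) - n + 1) = - qint r (m + n - 1)"
  proof - have "(-m) - n + 1 = -(m+n-1)" by simp thus ?thesis by (simp only: qint_neg) qed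
  have e2: "qint r ((-m) - 2*n) = - qint r (m + 2*n)"
  proof - have "(-m) - 2*n = -(m+2*n)" by simp thus ?thesis by (simp only: qint_neg) qed
  have e3: "qint r ((-m) - n) = - qint r (m + n)"
  proof - have "(-m) - n = -(m+n)" by simp thus ?thesis by (simp only: qint_neg) qed
  from q[unfolded e1 e2 e3] show ?thesis by (simp add: algebra_simps)
qed



locale wmod =
  fixes r :: nat and sc :: "complex \<Rightarrow> 'v::ab_group_add \<Rightarrow> 'v" and E F K Ki H :: "'v \<Rightarrow> 'v"
  assumes vs: "vector_space sc"
    and lE: "Vector_Spaces.linear sc sc E" and lF: "Vector_Spaces.linear sc sc F"
    and lK: "Vector_Spaces.linear sc sc K" and lKi: "Vector_Spaces.linear sc sc Ki" and lH: "Vector_Spaces.linear sc sc H"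
    and KKi: "\<forall>x. Ki (K x) = x"
    and comm: "\<forall>x. E (F x) - F (E x) = sc (1 / (qp r 1 - qp r (-1))) (K x - Ki x)"
    and HE: "\<forall>x. H (E x) - E (H x) = sc 2 (E x)"
    and HF: "\<forall>x. H (F x) - F (H x) = sc (-2) (F x)"
    and Er: "\<forall>x. (E ^^ r) x = 0" and Fr: "\<forall>x. (F ^^ r) x = 0"
    and HK: "\<forall>w c. H w = sc c w \<longrightarrow> K w = sc (qp r c) w"
    and r2: "2 \<le> r"
begin

sublocale vector_space sc by (rule vs)

lemma Eadd: "E (x + y) = E x + E y"
  using lE unfolding Vector_Spaces.linear_iff by blast
lemma Esc: "E (sc c x) = sc c (E x)"
  using lE unfolding Vector_Spaces.linear_iff by blast
lemma Fadd: "F (x + y) = F x + F y"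
  using lF unfolding Vector_Spaces.linear_iff by blast
lemma Fsc: "F (sc c x) = sc c (F x)"
  using lF unfolding Vector_Spaces.linear_iff by blast
lemma Hadd: "H (x + y) = H x + H y"
  using lH unfolding Vector_Spaces.linear_iff by blast
lemma Hsc: "H (sc c x) = sc c (H x)"
  using lH unfolding Vector_Spaces.linear_iff by blast
lemma Kadd: "K (x + y) = K x + K y"
  using lK unfolding Vector_Spaces.linear_iff by blast
lemma Ksc: "K (sc c x) = sc c (K x)"
  using lK unfolding Vector_Spaces.linear_iff by blast
lemma Kiadd: "Ki (x + y) = Ki x + Ki y"
  using lKi unfolding Vector_Spaces.linear_iff by blast
lemma Kisc: "Ki (sc c x) = sc c (Ki x)"
  using lKi unfolding Vector_Spaces.linear_iff by blast

lemma lin_span: assumes "Vector_Spaces.linear sc sc f" "\<And>g. g \<in> S \<Longrightarrow> f g \<in> span S" "x \<in> span S"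
  shows "f x \<in> span S"
proof -
  have a: "f (x + y) = f x + f y" "f (sc c x) = sc c (f x)" for x y c
    using assms(1) unfolding Vector_Spaces.linear_iff by blast+
  have z: "f 0 = 0" using a(2)[of 0 0] by simp
  have "subspace {x. f x \<in> span S}"
    unfolding subspace_def using z a by (simp add: span_zero span_add span_scale)
  from span_induct[OF assms(3), of "\<lambda>x. f x \<in> span S"] this assms(2) show ?thesis by simp
qed

lemma E0[simp]: "E 0 = 0" using Esc[of 0 0] by simp
lemma F0[simp]: "F 0 = 0" using Fsc[of 0 0] by simp
lemma Epow0[simp]: "(E^^n) 0 = 0" by (induction n) auto
lemma Fpow0[simp]: "(F^^n) 0 = 0" by (induction n) auto
lemma Epow_sc: "(E^^n) (sc c x) = sc c ((E^^n) x)" by (induction n) (auto simp: Esc)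
lemma Fpow_sc: "(F^^n) (sc c x) = sc c ((F^^n) x)" by (induction n) (auto simp: Fsc)
lemma Epow_add: "(E^^n) (x + y) = (E^^n) x + (E^^n) y" by (induction n) (auto simp: Eadd)
lemma Fpow_add: "(F^^n) (x + y) = (F^^n) x + (F^^n) y" by (induction n) (auto simp: Fadd)

definition wt :: "'v \<Rightarrow> complex \<Rightarrow> bool" where "wt y \<mu> \<longleftrightarrow> H y = sc \<mu> y"

lemma wt_E: "wt y \<mu> \<Longrightarrow> wt (E y) (\<mu> + 2)"
proof -
  assume "wt y \<mu>"
  hence "H (E y) = E (sc \<mu> y) + sc 2 (E y)" using HE[rule_format, of y] unfolding wt_def diff_eq_eq
    by (simp add: add.commute)
  thus ?thesis unfolding wt_def by (simp add: Esc scale_left_distrib)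
qed

lemma wt_F: "wt y \<mu> \<Longrightarrow> wt (F y) (\<mu> - 2)"
proof -
  assume "wt y \<mu>"
  hence "H (F y) = F (sc \<mu> y) + sc (-2) (F y)" using HF[rule_format, of y] unfolding wt_def diff_eq_eq
    by (simp add: add.commute)
  moreover have "sc (\<mu> - 2) (F y) = sc \<mu> (F y) + sc (-2) (F y)"
    using scale_left_distrib[of \<mu> "-2" "F y"] by simp
  ultimately show ?thesis unfolding wt_def by (simp add: Fsc)
qed

lemma wt_Epow: "wt y \<mu> \<Longrightarrow> wt ((E^^n) y) (\<mu> + 2 * of_nat n)"
proof (induction n)
  case 0 thus ?case by simp
next
  case (Suc n)
  from wt_E[OF Suc.IH[OF Suc.prems]] show ?case by (simp add: algebra_simps)
qed

lemma wt_Fpow: "wt y \<mu> \<Longrightarrow> wt ((F^^n) y) (\<mu> - 2 * of_nat n)"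
proof (induction n)
  case 0 thus ?case by simp
next
  case (Suc n)
  from wt_F[OF Suc.IH[OF Suc.prems]] show ?case by (simp add: algebra_simps)
qed

lemma wt_sc: "wt y \<mu> \<Longrightarrow> wt (sc c y) \<mu>"
  unfolding wt_def by (simp add: Hsc mult.commute)

lemma K_wt: "wt y \<mu> \<Longrightarrow> K y = sc (qp r \<mu>) y"
  using HK unfolding wt_def by blast

lemma Ki_wt: assumes "wt y \<mu>" shows "Ki y = sc (qp r (-\<mu>)) y"
proof -
  have "sc (qp r (-\<mu>)) (K y) = y" using K_wt[OF assms] by (simp add: qp_neg)
  hence "Ki y = Ki (sc (qp r (-\<mu>)) (K y))" by simp
  also have "\<dots> = sc (qp r (-\<mu>)) y" using KKi by (simp add: Kisc)
  finally show ?thesis .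
qed

lemma EF_wt: assumes "wt y \<mu>" shows "E (F y) = F (E y) + sc (qint r \<mu>) y"
proof -
  have "E (F y) - F (E y) = sc (1 / (qp r 1 - qp r (-1))) (sc (qp r \<mu>) y - sc (qp r (-\<mu>)) y)"
    using comm K_wt[OF assms] Ki_wt[OF assms] by simp
  also have "\<dots> = sc ((1 / (qp r 1 - qp r (-1))) * (qp r \<mu> - qp r (-\<mu>))) y"
    by (simp only: scale_right_diff_distrib scale_scale right_diff_distrib scale_left_diff_distrib)
  also have "\<dots> = sc (qint r \<mu>) y"
    unfolding qint_def qbr_def by (rule arg_cong[where f="\<lambda>c. sc c y"]) simp
  finally show ?thesis by (simp add: diff_eq_eq add.commute)
qed

definition P :: "complex \<Rightarrow> complex \<Rightarrow> 'v \<Rightarrow> 'v" where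
  "P c0 \<mu> y = F (E y) + sc (cc r \<mu> - c0) y"

lemma P_E: assumes "wt y \<mu>" shows "E (P c0 \<mu> y) = P c0 (\<mu> + 2) (E y)"
proof -
  have "E (P c0 \<mu> y) = F (E (E y)) + sc (qint r (\<mu> + 2)) (E y) + sc (cc r \<mu> - c0) (E y)"
    unfolding P_def Eadd Esc using EF_wt[OF wt_E[OF assms]] by simp
  also have "\<dots> = P c0 (\<mu> + 2) (E y)"
    unfolding P_def cc_step[OF r2] by (simp add: algebra_simps)
  finally show ?thesis .
qed

lemma P_F: assumes "wt y \<mu>" shows "F (P c0 \<mu> y) = P c0 (\<mu> - 2) (F y)"
proof -
  have cs: "cc r \<mu> = cc r (\<mu> - 2) + qint r \<mu>" using cc_step[OF r2, of "\<mu> - 2"] by simp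
  have "P c0 (\<mu> - 2) (F y) = F (F (E y)) + sc (qint r \<mu>) (F y) + sc (cc r (\<mu> - 2) - c0) (F y)"
    unfolding P_def EF_wt[OF assms] Fadd Fsc by simp
  also have "\<dots> = F (P c0 \<mu> y)"
    unfolding P_def cs Fadd Fsc by (simp add: algebra_simps)
  finally show ?thesis by simp
qed

lemma P_Epow: "wt y \<mu> \<Longrightarrow> (E^^n) (P c0 \<mu> y) = P c0 (\<mu> + 2 * of_nat n) ((E^^n) y)"
proof (induction n)
  case 0 thus ?case by simp
next
  case (Suc n)
  show ?case using P_E[OF wt_Epow[OF Suc.prems, of n]] Suc by (simp add: algebra_simps)
qed

lemma P_Fpow: "wt y \<mu> \<Longrightarrow> (F^^n) (P c0 \<mu> y) = P c0 (\<mu> - 2 * of_nat n) ((F^^n) y)"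
proof (induction n)
  case 0 thus ?case by simp
next
  case (Suc n)
  show ?case using P_F[OF wt_Fpow[OF Suc.prems, of n]] Suc by (simp add: algebra_simps)
qed

lemma P_sc: "P c0 \<mu> (sc c y) = sc c (P c0 \<mu> y)"
  unfolding P_def by (simp add: Esc Fsc scale_right_distrib scale_left_commute)

lemma inj1: assumes "P c0 \<mu> (P c0 \<mu> y) = 0" "F (E y) = 0" "cc r \<mu> \<noteq> c0" shows "y = 0"
proof -
  have "P c0 \<mu> y = sc (cc r \<mu> - c0) y" unfolding P_def using assms(2) by simp
  hence "P c0 \<mu> (P c0 \<mu> y) = sc ((cc r \<mu> - c0) * (cc r \<mu> - c0)) y"
    unfolding P_sc by (simp add: P_def assms(2) Esc Fsc)
  with assms show ?thesis by simp
qed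

lemma eig1: "P c0 \<mu> y = 0 \<Longrightarrow> F (E y) = sc (c0 - cc r \<mu>) y"
proof -
  assume "P c0 \<mu> y = 0"
  moreover have "sc (c0 - cc r \<mu>) y = - sc (cc r \<mu> - c0) y" by (metis minus_diff_eq scale_minus_left)
  ultimately show ?thesis unfolding P_def by (simp add: add_eq_0_iff)
qed

lemma eig2: assumes "wt y \<mu>" "P c0 \<mu> y = 0" shows "E (F y) = sc (c0 - cc r (\<mu> - 2)) y"
proof -
  have cs: "cc r \<mu> = cc r (\<mu> - 2) + qint r \<mu>" using cc_step[OF r2, of "\<mu> - 2"] by simp
  show ?thesis unfolding EF_wt[OF assms(1)] eig1[OF assms(2)] cs
    by (simp add: algebra_simps)
qed

end


context wmod begin

lemma Ediff: "E (x - y) = E x - E y"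
  using Eadd[of "x - y" y] by (simp add: eq_diff_eq)
lemma Fdiff: "F (x - y) = F x - F y"
  using Fadd[of "x - y" y] by (simp add: eq_diff_eq)

lemma EFpow: assumes "wt y \<mu>"
  shows "E ((F^^Suc n) y) = (F^^Suc n) (E y)
     + sc (qint r (of_nat (Suc n)) * qint r (\<mu> - of_nat (Suc n) + 1)) ((F^^n) y)"
proof (induction n)
  case 0
  show ?case using EF_wt[OF assms] by (simp add: qint_1[OF r2])
next
  case (Suc n)
  have w: "wt ((F^^Suc n) y) (\<mu> - 2 * of_nat (Suc n))" by (rule wt_Fpow[OF assms])
  have "E ((F^^Suc (Suc n)) y) = F (E ((F^^Suc n) y)) + sc (qint r (\<mu> - 2 * of_nat (Suc n))) ((F^^Suc n) y)"
    using EF_wt[OF w] by simp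
  also have "\<dots> = (F^^Suc (Suc n)) (E y)
     + sc (qint r (of_nat (Suc n)) * qint r (\<mu> - of_nat (Suc n) + 1) + qint r (\<mu> - 2 * of_nat (Suc n))) ((F^^Suc n) y)"
    unfolding Suc Fadd Fsc by (simp add: scale_left_distrib add.assoc)
  also have "qint r (of_nat (Suc n)) * qint r (\<mu> - of_nat (Suc n) + 1) + qint r (\<mu> - 2 * of_nat (Suc n))
      = qint r (of_nat (Suc (Suc n))) * qint r (\<mu> - of_nat (Suc (Suc n)) + 1)"
  proof -
    have "qint r (of_nat (Suc n)) * qint r (\<mu> - of_nat (Suc n) + 1) + qint r (\<mu> - 2 * of_nat (Suc n))
      = qint r (of_nat (Suc n) + 1) * qint r (\<mu> - of_nat (Suc n))" by (rule qid[OF r2])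
    moreover have "(of_nat (Suc n) + 1 :: complex) = of_nat (Suc (Suc n))" by simp
    moreover have "(\<mu> - of_nat (Suc n)) = \<mu> - of_nat (Suc (Suc n)) + 1" by simp
    ultimately show ?thesis by metis
  qed
  finally show ?case .
qed

lemma FEpow: assumes "wt y \<mu>"
  shows "F ((E^^Suc n) y) = (E^^Suc n) (F y)
     - sc (qint r (of_nat (Suc n)) * qint r (\<mu> + of_nat (Suc n) - 1)) ((E^^n) y)"
proof (induction n)
  case 0
  show ?case using EF_wt[OF assms] by (simp add: qint_1[OF r2] eq_diff_eq)
next
  case (Suc n)
  have w: "wt ((E^^Suc n) y) (\<mu> + 2 * of_nat (Suc n))" by (rule wt_Epow[OF assms])
  have "F ((E^^Suc (Suc n)) y) = E (F ((E^^Suc n) y)) - sc (qint r (\<mu> + 2 * of_nat (Suc n))) ((E^^Suc n) y)"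
    using EF_wt[OF w] by (simp add: eq_diff_eq)
  also have "\<dots> = (E^^Suc (Suc n)) (F y)
     - sc (qint r (of_nat (Suc n)) * qint r (\<mu> + of_nat (Suc n) - 1) + qint r (\<mu> + 2 * of_nat (Suc n))) ((E^^Suc n) y)"
    unfolding Suc Ediff Esc by (simp add: scale_left_distrib diff_diff_eq)
  also have "qint r (of_nat (Suc n)) * qint r (\<mu> + of_nat (Suc n) - 1) + qint r (\<mu> + 2 * of_nat (Suc n))
      = qint r (of_nat (Suc (Suc n))) * qint r (\<mu> + of_nat (Suc (Suc n)) - 1)"
  proof -
    have "qint r (of_nat (Suc n)) * qint r (\<mu> + of_nat (Suc n) - 1) + qint r (\<mu> + 2 * of_nat (Suc n))
      = qint r (of_nat (Suc n) + 1) * qint r (\<mu> + of_nat (Suc n))" by (rule qid2[OF r2])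
    moreover have "(of_nat (Suc n) + 1 :: complex) = of_nat (Suc (Suc n))" by simp
    moreover have "(\<mu> + of_nat (Suc n)) = \<mu> + of_nat (Suc (Suc n)) - 1" by simp
    ultimately show ?thesis by metis
  qed
  finally show ?case .
qed

lemma core:
  fixes i :: nat and v :: 'v
  assumes wt0: "H v = sc (of_nat i) v" and dom: "F (E (F (E v))) = 0" and ir: "i + 2 \<le> r"
  shows "(E^^(r - i)) v = 0" and "E (F (E v)) = 0" and "(F^^(Suc i)) (F (E v)) = 0"
proof -
  define c0 where "c0 = cc r (of_nat i)"
  define j where "j = r - 2 - i"
  have jr: "i + j + 2 = r" unfolding j_def using ir by simp
  have wv: "wt v (of_nat i)" using wt0 unfolding wt_def .
  have wFEv: "wt (F (E v)) (of_nat i)" using wt_F[OF wt_E[OF wv]] by simp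
  have Pv: "P c0 (of_nat i) v = F (E v)" unfolding P_def c0_def by simp
  have Pw: "P c0 (of_nat i) (F (E v)) = 0" unfolding P_def c0_def using dom by simp
  have c0i: "c0 = cc r (of_int (int i))" unfolding c0_def by simp
  have PPE: "P c0 (of_nat i + 2 * of_nat n) (P c0 (of_nat i + 2 * of_nat n) ((E^^n) v)) = 0" for n
  proof -
    have "(E^^n) (P c0 (of_nat i) (P c0 (of_nat i) v)) = 0" using Pv Pw by simp
    thus ?thesis using P_Epow[OF wFEv, of n c0] P_Epow[OF wv, of n c0] Pv by simp
  qed
  have C: "a \<le> i \<longrightarrow> (E^^(r - a)) v = 0" for a
  proof (induction a)
    case 0 show ?case using Er by simp
  next
    case (Suc a)
    show ?case
    proof
      assume a: "Suc a \<le> i"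
      define n where "n = r - Suc a"
      have nS: "Suc n = r - a" unfolding n_def using a ir by simp
      have ni: "int n = int r - int a - 1" unfolding n_def using a ir by simp
      have "E ((E^^n) v) = (E^^(r-a)) v" by (simp add: nS[symmetric])
      hence FE: "F (E ((E^^n) v)) = 0" using Suc a by simp
      have ne: "cc r (of_nat i + 2 * of_nat n) \<noteq> c0"
      proof -
        have e: "(of_nat i + 2 * of_nat n :: complex) = of_int (int i + 2 * int n)" by simp
        show ?thesis unfolding e c0i
        proof (rule cc_ne[OF r2])
          show "\<not> int (2 * r) dvd (int i + 2 * int n - int i)"
            by (rule ndvd_range[where k=0]) (use ni a ir in simp_all)
          show "\<not> int (2 * r) dvd (int i + 2 * int n + int i + 2)"
            by (rule ndvd_range[where k=1]) (use ni a ir in simp_all)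
        qed
      qed
      have "(E^^n) v = 0" by (rule inj1[OF PPE FE ne])
      thus "(E^^(r - Suc a)) v = 0" unfolding n_def .
    qed
  qed
  show C1: "(E^^(r - i)) v = 0" using C[of i] by simp
  define u where "u = E (F (E v))"
  have wEv: "wt (E v) (of_nat i + 2)" by (rule wt_E[OF wv])
  have wu: "wt u (of_nat i + 2)" unfolding u_def by (rule wt_E[OF wFEv])
  have PEv: "P c0 (of_nat i + 2) (E v) = u" unfolding u_def using P_E[OF wv, of c0] Pv by simp
  have Pu: "P c0 (of_nat i + 2) u = 0" unfolding u_def using P_E[OF wFEv, of c0] Pw by simp
  have un: "(E^^n) u = P c0 (of_nat i + 2 + 2 * of_nat n) ((E^^n) (E v))" for n
    using P_Epow[OF wEv, of n c0] PEv by simp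
  have Pun: "P c0 (of_nat i + 2 + 2 * of_nat n) ((E^^n) u) = 0" for n
    using P_Epow[OF wu, of n c0] Pu by simp
  have A: "b \<le> j \<longrightarrow> (E^^(j - b)) u = 0" for b
  proof (induction b)
    case 0
    have "E ((E^^j) (E v)) = (E^^(r - i)) v"
    proof -
      have "r - i = Suc (Suc j)" using jr by simp
      thus ?thesis by (simp add: funpow_Suc_right del: funpow.simps) (simp add: funpow_swap1)
    qed
    hence z: "E ((E^^j) (E v)) = 0" using C1 by simp
    have ce: "cc r (of_nat i + 2 + 2 * of_nat j) = c0"
    proof -
      have e: "(of_nat i + 2 + 2 * of_nat j :: complex) = of_int (int i + 2 + 2 * int j)" by simp
      show ?thesis unfolding e c0i by (rule cc_eq) (use jr r2 in simp_all)
    qed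
    show ?case using un[of j] z ce by (simp add: P_def)
  next
    case (Suc b)
    show ?case
    proof
      assume b: "Suc b \<le> j"
      define n where "n = j - Suc b"
      have nS: "Suc n = j - b" unfolding n_def using b by simp
      have ni: "int n = int j - int b - 1" unfolding n_def using b by simp
      have "E ((E^^n) u) = (E^^(j-b)) u" by (simp add: nS[symmetric])
      hence Ez: "E ((E^^n) u) = 0" using Suc b by simp
      have ne: "cc r (of_nat i + 2 + 2 * of_nat n) \<noteq> c0"
      proof -
        have e: "(of_nat i + 2 + 2 * of_nat n :: complex) = of_int (int i + 2 + 2 * int n)" by simp
        show ?thesis unfolding e c0i
        proof (rule cc_ne[OF r2])
          show "\<not> int (2 * r) dvd (int i + 2 + 2 * int n - int i)"
            by (rule ndvd_range[where k=0]) (use ni b jr in simp_all)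
          show "\<not> int (2 * r) dvd (int i + 2 + 2 * int n + int i + 2)"
            by (rule ndvd_range[where k=0]) (use ni b jr in simp_all)
        qed
      qed
      from eig1[OF Pun[of n]] Ez have "sc (c0 - cc r (of_nat i + 2 + 2 * of_nat n)) ((E^^n) u) = 0" by simp
      hence "(E^^n) u = 0" using ne by simp
      thus "(E^^(j - Suc b)) u = 0" unfolding n_def .
    qed
  qed
  show "E (F (E v)) = 0" using A[of j] unfolding u_def by simp
  define w where "w = F (E v)"
  have Pwn: "P c0 (of_nat i - 2 * of_nat n) ((F^^n) w) = 0" for n
    using P_Fpow[OF wFEv, of n c0] Pw unfolding w_def by simp
  have B: "b \<le> j \<longrightarrow> (F^^(i + 1 + (j - b))) w = 0" for b
  proof (induction b)
    case 0
    have "(F^^(i + 1 + j)) w = (F^^r) (E v)"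
    proof -
      have "r = Suc (i + 1 + j)" using jr by simp
      thus ?thesis unfolding w_def by (simp add: funpow_Suc_right del: funpow.simps)
    qed
    thus ?case using Fr by simp
  next
    case (Suc b)
    show ?case
    proof
      assume b: "Suc b \<le> j"
      define n where "n = i + 1 + (j - Suc b)"
      have nS: "Suc n = i + 1 + (j - b)" unfolding n_def using b by simp
      have ni: "int n = int i + int j - int b" unfolding n_def using b by simp
      have "F ((F^^n) w) = (F^^(Suc n)) w" by simp
      hence "F ((F^^n) w) = (F^^(i + 1 + (j - b))) w" unfolding nS .
      hence Fz: "F ((F^^n) w) = 0" using Suc b by simp
      have wy: "wt ((F^^n) w) (of_nat i - 2 * of_nat n)" unfolding w_def by (rule wt_Fpow[OF wFEv])
      have ne: "cc r (of_nat i - 2 * of_nat n - 2) \<noteq> c0"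
      proof -
        have e: "(of_nat i - 2 * of_nat n - 2 :: complex) = of_int (int i - 2 * int n - 2)" by simp
        show ?thesis unfolding e c0i
        proof (rule cc_ne[OF r2])
          show "\<not> int (2 * r) dvd (int i - 2 * int n - 2 - int i)"
            by (rule ndvd_range[where k="-1"]) (use ni b jr in simp_all)
          show "\<not> int (2 * r) dvd (int i - 2 * int n - 2 + int i + 2)"
            by (rule ndvd_range[where k="-1"]) (use ni b jr in simp_all)
        qed
      qed
      from eig2[OF wy Pwn[of n]] Fz have "sc (c0 - cc r (of_nat i - 2 * of_nat n - 2)) ((F^^n) w) = 0" by simp
      hence "(F^^n) w = 0" using ne by simp
      thus "(F^^(i + 1 + (j - Suc b))) w = 0" unfolding n_def .
    qed
  qed
  show "(F^^(Suc i)) (F (E v)) = 0" using B[of j] unfolding w_def by simp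
qed

lemma main:
  fixes i j :: nat and v :: 'v and h R s L :: "nat \<Rightarrow> 'v"
  assumes wt0: "H v = sc (of_nat i) v"
    and dom: "F (E (F (E v))) = 0"
    and ir: "i + 2 \<le> r"
    and jdef: "j = r - 2 - i"
    and hdef: "\<And>k. h k = (F ^^ k) v"
    and Rdef: "\<And>k. R k = (E ^^ k) (E v)"
    and sdef: "\<And>k. s k = (F ^^ k) (F (E v))"
    and Ldef: "\<And>k. L k = (F ^^ k) ((F ^^ (i + 1)) v)"
  shows
    "(let S = h ` {0..i} \<union> R ` {0..j} \<union> s ` {0..i} \<union> L ` {0..j};
          W = span S
      in \<forall>x\<in>W. E x \<in> W \<and> F x \<in> W \<and> K x \<in> W \<and> Ki x \<in> W \<and> H x \<in> W)
   \<and> (\<forall>k\<le>i. H (h k) = sc (of_int (int i - 2 * int k)) (h k)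
              \<and> K (h k) = sc (qp r (of_int (int i - 2 * int k))) (h k))
   \<and> (\<forall>k\<le>i. H (s k) = sc (of_int (int i - 2 * int k)) (s k)
              \<and> K (s k) = sc (qp r (of_int (int i - 2 * int k))) (s k))
   \<and> (\<forall>k\<le>j. H (R k) = sc (of_int (int r - int j + 2 * int k)) (R k)
              \<and> K (R k) = sc (qp r (of_int (int r - int j + 2 * int k))) (R k))
   \<and> (\<forall>k\<le>j. H (L k) = sc (of_int (int j - int r - 2 * int k)) (L k)
              \<and> K (L k) = sc (qp r (of_int (int j - int r - 2 * int k))) (L k))
   \<and> (\<forall>k<j. E (R k) = R (k + 1))
   \<and> (\<forall>k<i. F (h k) = h (k + 1))
   \<and> (\<forall>k<i. F (s k) = s (k + 1))
   \<and> (\<forall>k<j. F (L k) = L (k + 1))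
   \<and> F (h i) = L 0
   \<and> E (L 0) = s i
   \<and> E (R j) = 0 \<and> E (s 0) = 0 \<and> F (s i) = 0 \<and> F (L j) = 0
   \<and> (\<forall>k. 1 \<le> k \<and> k \<le> i \<longrightarrow>
          E (h k) = sc (qgamma r i k) (h (k - 1)) + s (k - 1))
   \<and> (\<forall>k. 1 \<le> k \<and> k \<le> i \<longrightarrow> E (s k) = sc (qgamma r i k) (s (k - 1)))
   \<and> (\<forall>k. 1 \<le> k \<and> k \<le> j \<longrightarrow> F (R k) = sc (- qgamma r j k) (R (k - 1)))
   \<and> (\<forall>k. 1 \<le> k \<and> k \<le> j \<longrightarrow> E (L k) = sc (- qgamma r j k) (L (k - 1)))"
proof -
  have jr: "i + j + 2 = r" unfolding jdef using ir by simp
  have jri: "int r = int i + int j + 2" using jr by simp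
  have jrc: "(of_nat r :: complex) = of_nat i + of_nat j + 2"
  proof - have "(of_nat r :: complex) = of_nat (i + j + 2)" using jr by simp thus ?thesis by simp qed
  have r0: "r > 0" using ir by simp
  have wv: "wt v (of_nat i)" using wt0 unfolding wt_def .
  have wEv: "wt (E v) (of_nat i + 2)" by (rule wt_E[OF wv])
  have wFEv: "wt (F (E v)) (of_nat i)" using wt_F[OF wt_E[OF wv]] by simp
  note cr = core[OF wt0 dom ir]
  have EjR: "E (R j) = 0"
  proof -
    have "r - i = Suc (Suc j)" using jr by simp
    hence "E (R j) = (E^^(r - i)) v" unfolding Rdef
      by (simp add: funpow_Suc_right del: funpow.simps) (simp add: funpow_swap1)
    thus ?thesis using cr(1) by simp
  qed
  have Fbig: "(F^^n) (F (E v)) = 0" if "Suc i \<le> n" for n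
  proof -
    have e: "(F^^((n - Suc i) + Suc i)) (F (E v)) = (F^^(n - Suc i)) ((F^^(Suc i)) (F (E v)))"
      by (simp only: funpow_add comp_def)
    have "(n - Suc i) + Suc i = n" using that by simp
    hence "(F^^n) (F (E v)) = (F^^(n - Suc i)) ((F^^(Suc i)) (F (E v)))" using e by simp
    thus ?thesis using cr(3) by simp
  qed
  have Eu: "(E^^Suc n) (F (E v)) = 0" for n
    using cr(2) by (simp add: funpow_Suc_right del: funpow.simps)
  have wh: "wt (h k) (of_nat i - 2 * of_nat k)" for k unfolding hdef by (rule wt_Fpow[OF wv])
  have ws: "wt (s k) (of_nat i - 2 * of_nat k)" for k unfolding sdef by (rule wt_Fpow[OF wFEv])
  have wR: "wt (R k) (of_nat i + 2 + 2 * of_nat k)" for k unfolding Rdef by (rule wt_Epow[OF wEv])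
  have wL: "wt (L k) (of_nat i - 2 * of_nat (i + 1) - 2 * of_nat k)" for k unfolding Ldef
    by (rule wt_Fpow[OF wt_Fpow[OF wv]])
  have Lalt: "L k = (F^^(k + (i+1))) v" for k unfolding Ldef by (simp only: funpow_add comp_def)
  have eh: "(of_int (int i - 2 * int k) :: complex) = of_nat i - 2 * of_nat k" for k by simp
  have eR: "(of_int (int r - int j + 2 * int k) :: complex) = of_nat i + 2 + 2 * of_nat k" for k
    unfolding jri by simp
  have eL: "(of_int (int j - int r - 2 * int k) :: complex) = of_nat i - 2 * of_nat (i + 1) - 2 * of_nat k" for k
    unfolding jri by simp
  have Hh: "\<forall>k\<le>i. H (h k) = sc (of_int (int i - 2 * int k)) (h k)
              \<and> K (h k) = sc (qp r (of_int (int i - 2 * int k))) (h k)"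
    using wh K_wt unfolding eh wt_def by blast
  have Hs: "\<forall>k\<le>i. H (s k) = sc (of_int (int i - 2 * int k)) (s k)
              \<and> K (s k) = sc (qp r (of_int (int i - 2 * int k))) (s k)"
    using ws K_wt unfolding eh wt_def by blast
  have HR: "\<forall>k\<le>j. H (R k) = sc (of_int (int r - int j + 2 * int k)) (R k)
              \<and> K (R k) = sc (qp r (of_int (int r - int j + 2 * int k))) (R k)"
    using wR K_wt unfolding eR wt_def by blast
  have HL: "\<forall>k\<le>j. H (L k) = sc (of_int (int j - int r - 2 * int k)) (L k)
              \<and> K (L k) = sc (qp r (of_int (int j - int r - 2 * int k))) (L k)"
    using wL K_wt unfolding eL wt_def by blast
  have ER: "E (R k) = R (k + 1)" for k unfolding Rdef by simp
  have Fh: "F (h k) = h (k + 1)" for k unfolding hdef by simp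
  have Fs: "F (s k) = s (k + 1)" for k unfolding sdef by simp
  have FL: "F (L k) = L (k + 1)" for k unfolding Ldef by simp
  have FhL: "F (h i) = L 0" unfolding hdef Ldef by simp
  have EL0: "E (L 0) = s i"
  proof -
    have "E (L 0) = (F^^Suc i) (E v) + sc (qint r (of_nat (Suc i)) * qint r (of_nat i - of_nat (Suc i) + 1)) ((F^^i) v)"
      unfolding Ldef using EFpow[OF wv, of i] by simp
    also have "(of_nat i - of_nat (Suc i) + 1 :: complex) = 0" by simp
    finally show ?thesis unfolding sdef by (simp add: funpow_Suc_right del: funpow.simps)
  qed
  have Es0: "E (s 0) = 0" unfolding sdef using cr(2) by simp
  have Fsi: "F (s i) = 0" unfolding sdef using cr(3) by simp
  have FLj: "F (L j) = 0" unfolding Lalt using Fr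
  proof -
    have sr: "Suc (j + (i+1)) = r" using jr by simp
    have "F ((F^^(j + (i+1))) v) = (F^^(Suc (j + (i+1)))) v" by (simp only: funpow.simps comp_def)
    also have "\<dots> = (F^^r) v" unfolding sr ..
    finally have "F ((F^^(j + (i+1))) v) = (F^^r) v" .
    thus "F ((F^^(j + (i+1))) v) = 0" using Fr by simp
  qed
  have Eh: "\<forall>k. 1 \<le> k \<and> k \<le> i \<longrightarrow> E (h k) = sc (qgamma r i k) (h (k - 1)) + s (k - 1)"
  proof (intro allI impI)
    fix k assume k: "1 \<le> k \<and> k \<le> i"
    then obtain k' where kk: "k = Suc k'" by (cases k) auto
    show "E (h k) = sc (qgamma r i k) (h (k - 1)) + s (k - 1)"
      unfolding kk hdef sdef qgamma_def using EFpow[OF wv, of k']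
      by (simp add: funpow_Suc_right add.commute del: funpow.simps)
  qed
  have Es: "\<forall>k. 1 \<le> k \<and> k \<le> i \<longrightarrow> E (s k) = sc (qgamma r i k) (s (k - 1))"
  proof (intro allI impI)
    fix k assume k: "1 \<le> k \<and> k \<le> i"
    then obtain k' where kk: "k = Suc k'" by (cases k) auto
    show "E (s k) = sc (qgamma r i k) (s (k - 1))"
      unfolding kk sdef qgamma_def using EFpow[OF wFEv, of k'] cr(2) by simp
  qed
  have FR: "\<forall>k. 1 \<le> k \<and> k \<le> j \<longrightarrow> F (R k) = sc (- qgamma r j k) (R (k - 1))"
  proof (intro allI impI)
    fix k assume k: "1 \<le> k \<and> k \<le> j"
    then obtain k' where kk: "k = Suc k'" by (cases k) auto
    have a: "(of_nat j - of_nat (Suc k') + 1 :: complex) = of_nat r - (of_nat i + 2 + of_nat (Suc k') - 1)"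
      unfolding jrc by simp
    have g: "qgamma r j k = qint r (of_nat (Suc k')) * qint r (of_nat i + 2 + of_nat (Suc k') - 1)"
      unfolding qgamma_def kk a qint_refl[OF r0] ..
    show "F (R k) = sc (- qgamma r j k) (R (k - 1))"
      unfolding g unfolding kk Rdef using FEpow[OF wEv, of k'] Eu[of k'] by simp
  qed
  have EL: "\<forall>k. 1 \<le> k \<and> k \<le> j \<longrightarrow> E (L k) = sc (- qgamma r j k) (L (k - 1))"
  proof (intro allI impI)
    fix k assume k: "1 \<le> k \<and> k \<le> j"
    then obtain k' where kk: "k = Suc k'" by (cases k) auto
    define n where "n = k' + (i + 1)"
    have a1: "(of_nat i - of_nat (Suc n) + 1 :: complex) = - of_nat (Suc k')" unfolding n_def by simp
    have a2: "(of_nat j - of_nat (Suc k') + 1 :: complex) = of_nat r - of_nat (Suc n)"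
      unfolding jrc n_def by simp
    have g: "qint r (of_nat (Suc n)) * qint r (of_nat i - of_nat (Suc n) + 1) = - qgamma r j k"
      unfolding qgamma_def kk a1 a2 qint_refl[OF r0] qint_neg by simp
    have z: "(F^^Suc n) (E v) = 0"
      using Fbig[of n] unfolding n_def by (simp add: funpow_Suc_right del: funpow.simps)
    have "E (L k) = E ((F^^Suc n) v)" unfolding Lalt kk n_def by simp
    also have "\<dots> = sc (- qgamma r j k) ((F^^n) v)" using EFpow[OF wv, of n] z g by simp
    also have "(F^^n) v = L (k - 1)" unfolding Lalt kk n_def by simp
    finally show "E (L k) = sc (- qgamma r j k) (L (k - 1))" .
  qed
  have span_part: "(let S = h ` {0..i} \<union> R ` {0..j} \<union> s ` {0..i} \<union> L ` {0..j};
          W = span S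
      in \<forall>x\<in>W. E x \<in> W \<and> F x \<in> W \<and> K x \<in> W \<and> Ki x \<in> W \<and> H x \<in> W)"
  proof -
    define S where "S = h ` {0..i} \<union> R ` {0..j} \<union> s ` {0..i} \<union> L ` {0..j}"
    have hS: "k \<le> i \<Longrightarrow> h k \<in> span S" for k unfolding S_def by (intro span_base) auto
    have sS: "k \<le> i \<Longrightarrow> s k \<in> span S" for k unfolding S_def by (intro span_base) auto
    have RS: "k \<le> j \<Longrightarrow> R k \<in> span S" for k unfolding S_def by (intro span_base) auto
    have LS: "k \<le> j \<Longrightarrow> L k \<in> span S" for k unfolding S_def by (intro span_base) auto
    have wS: "\<exists>\<mu>. wt g \<mu>" if "g \<in> S" for g
      using that wh ws wR wL unfolding S_def by blast
    have gE: "E g \<in> span S" if "g \<in> S" for g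
    proof -
      from that consider (h) k where "k \<le> i" "g = h k" | (R) k where "k \<le> j" "g = R k"
        | (s) k where "k \<le> i" "g = s k" | (L) k where "k \<le> j" "g = L k" unfolding S_def by auto
      thus ?thesis
      proof cases
        case h show ?thesis
        proof (cases "k = 0")
          case True
          have "E g = R 0" using h True by (simp add: hdef Rdef)
          thus ?thesis using RS[of 0] by simp
        next
          case False
          hence "E g = sc (qgamma r i k) (h (k - 1)) + s (k - 1)" using h Eh by simp
          thus ?thesis using h by (simp add: span_add span_scale hS sS)
        qed
      next
        case R show ?thesis
        proof (cases "k < j")
          case True thus ?thesis using R ER RS[of "k+1"] by simp
        next
          case False hence "k = j" using R by simp
          thus ?thesis using R EjR span_zero by simp
        qed
      next
        case s show ?thesis
        proof (cases "k = 0")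
          case True thus ?thesis using s Es0 span_zero by simp
        next
          case False
          hence "E g = sc (qgamma r i k) (s (k - 1))" using s Es by simp
          thus ?thesis using s by (simp add: span_scale sS)
        qed
      next
        case L show ?thesis
        proof (cases "k = 0")
          case True thus ?thesis using L EL0 sS[of i] by simp
        next
          case False
          hence "E g = sc (- qgamma r j k) (L (k - 1))" using L EL by simp
          thus ?thesis using L by (simp add: span_scale LS del: scale_minus_left)
        qed
      qed
    qed
    have gF: "F g \<in> span S" if "g \<in> S" for g
    proof -
      from that consider (h) k where "k \<le> i" "g = h k" | (R) k where "k \<le> j" "g = R k"
        | (s) k where "k \<le> i" "g = s k" | (L) k where "k \<le> j" "g = L k" unfolding S_def by auto
      thus ?thesis
      proof cases
        case h show ?thesis
        proof (cases "k < i")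
          case True thus ?thesis using h Fh hS[of "k+1"] by simp
        next
          case False hence "k = i" using h by simp
          thus ?thesis using h FhL LS[of 0] by simp
        qed
      next
        case R show ?thesis
        proof (cases "k = 0")
          case True
          have "F g = s 0" using R True by (simp add: sdef Rdef)
          thus ?thesis using sS[of 0] by simp
        next
          case False
          hence "F g = sc (- qgamma r j k) (R (k - 1))" using R FR by simp
          thus ?thesis using R by (simp add: span_scale RS del: scale_minus_left)
        qed
      next
        case s show ?thesis
        proof (cases "k < i")
          case True thus ?thesis using s Fs sS[of "k+1"] by simp
        next
          case False hence "k = i" using s by simp
          thus ?thesis using s Fsi span_zero by simp
        qed
      next
        case L show ?thesis
        proof (cases "k < j")
          case True thus ?thesis using L FL LS[of "k+1"] by simp
        next
          case False hence "k = j" using L by simp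
          thus ?thesis using L FLj span_zero by simp
        qed
      qed
    qed
    have gK: "K g \<in> span S" if "g \<in> S" for g
      using wS[OF that] K_wt span_scale span_base[OF that] by metis
    have gKi: "Ki g \<in> span S" if "g \<in> S" for g
      using wS[OF that] Ki_wt span_scale span_base[OF that] by metis
    have gH: "H g \<in> span S" if "g \<in> S" for g
      using wS[OF that] span_scale span_base[OF that] unfolding wt_def by metis
    have "\<forall>x\<in>span S. E x \<in> span S \<and> F x \<in> span S \<and> K x \<in> span S \<and> Ki x \<in> span S \<and> H x \<in> span S"
      using lin_span[OF lE gE] lin_span[OF lF gF] lin_span[OF lK gK] lin_span[OF lKi gKi] lin_span[OF lH gH]
      by blast
    thus ?thesis unfolding S_def Let_def .
  qed
  show ?thesis using span_part Hh Hs HR HL ER Fh Fs FL FhL EL0 EjR Es0 Fsi FLj Eh Es FR EL by blast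
qed

end

theorem proposition6p1:
  fixes r i j :: nat
    and scale :: "complex \<Rightarrow> 'v::ab_group_add \<Rightarrow> 'v"
    and E F K Ki H :: "'v \<Rightarrow> 'v"
    and v :: 'v
    and h R s L :: "nat \<Rightarrow> 'v"
  assumes mod: "weight_module r scale E F K Ki H"
    and wt: "v \<noteq> 0" "H v = scale (of_nat i) v"
    and dom: "F (E (F (E v))) = 0"
    and ir: "i + 2 \<le> r"
    and jdef: "j = r - 2 - i"
    and hdef: "\<And>k. h k = (F ^^ k) v"
    and Rdef: "\<And>k. R k = (E ^^ k) (E v)"
    and sdef: "\<And>k. s k = (F ^^ k) (F (E v))"
    and Ldef: "\<And>k. L k = (F ^^ k) ((F ^^ (i + 1)) v)"
  shows
    "(let S = h ` {0..i} \<union> R ` {0..j} \<union> s ` {0..i} \<union> L ` {0..j};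
          W = module.span scale S
      in \<forall>x\<in>W. E x \<in> W \<and> F x \<in> W \<and> K x \<in> W \<and> Ki x \<in> W \<and> H x \<in> W)
   \<and> (\<forall>k\<le>i. H (h k) = scale (of_int (int i - 2 * int k)) (h k)
              \<and> K (h k) = scale (qp r (of_int (int i - 2 * int k))) (h k))
   \<and> (\<forall>k\<le>i. H (s k) = scale (of_int (int i - 2 * int k)) (s k)
              \<and> K (s k) = scale (qp r (of_int (int i - 2 * int k))) (s k))
   \<and> (\<forall>k\<le>j. H (R k) = scale (of_int (int r - int j + 2 * int k)) (R k)
              \<and> K (R k) = scale (qp r (of_int (int r - int j + 2 * int k))) (R k))
   \<and> (\<forall>k\<le>j. H (L k) = scale (of_int (int j - int r - 2 * int k)) (L k)
              \<and> K (L k) = scale (qp r (of_int (int j - int r - 2 * int k))) (L k))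
   \<and> (\<forall>k<j. E (R k) = R (k + 1))
   \<and> (\<forall>k<i. F (h k) = h (k + 1))
   \<and> (\<forall>k<i. F (s k) = s (k + 1))
   \<and> (\<forall>k<j. F (L k) = L (k + 1))
   \<and> F (h i) = L 0
   \<and> E (L 0) = s i
   \<and> E (R j) = 0 \<and> E (s 0) = 0 \<and> F (s i) = 0 \<and> F (L j) = 0
   \<and> (\<forall>k. 1 \<le> k \<and> k \<le> i \<longrightarrow>
          E (h k) = scale (qgamma r i k) (h (k - 1)) + s (k - 1))
   \<and> (\<forall>k. 1 \<le> k \<and> k \<le> i \<longrightarrow> E (s k) = scale (qgamma r i k) (s (k - 1)))
   \<and> (\<forall>k. 1 \<le> k \<and> k \<le> j \<longrightarrow> F (R k) = scale (- qgamma r j k) (R (k - 1)))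
   \<and> (\<forall>k. 1 \<le> k \<and> k \<le> j \<longrightarrow> E (L k) = scale (- qgamma r j k) (L (k - 1)))"
proof -
  have W: "wmod r scale E F K Ki H"
    using mod ir unfolding weight_module_def wmod_def by auto
  show ?thesis by (rule wmod.main[OF W wt(2) dom ir jdef hdef Rdef sdef Ldef])
qed

end
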